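(* Let $G_1,G_2$ be finite connected bipartite $\mathcal{C}$-$\mathrm{HH}$ graphs which both satisfy property (B2). Then: (i) if $\Delta(G_1)\le\Delta(G_2)$, then $G_1$ is $\mathcal{C}$-$\mathrm{HH}$-morphic to $G_2$; (ii) if $\Delta(G_1)=\Delta(G_2)$, then $G_1,G_2$ are $\mathcal{C}$-$\mathrm{HH}$-symmetric; (iii) if $\Delta(G_1)>\Delta(G_2)$ and $G_2$ satisfies property (B2* ), then $G_1,G_2$ are $\mathcal{C}$-$\mathrm{HH}$-symmetric.
   Context: $\Delta(G)$ is the maximum degree. For a connected bipartite graph $G$ with bipartition $(X,Y)$: property (B2) means that for each $k\le\Delta(G)$ every $k$-element subset of $X$ and every $k$-element subset of $Y$ has a common neighbour (a vertex adjacent to all its elements); property (B2* ) means that some vertex is adjacent to all of $X$ and some vertex is adjacent to all of $Y$. Subgraphs are induced; a homomorphism maps edges to edges. A graph $G$ is $\mathcal{C}$-$\mathrm{HH}$ if every homomorphism from a finite connected induced subgraph of $G$ into $G$ extends to a homomorphism $G\to G$. $G_1$ is $\mathcal{C}$-$\mathrm{HH}$-morphic to $G_2$ if every homomorphism from a finite connected induced subgraph $A$ of $G_1$ onto an induced subgraph $B$ of $G_2$ extends to a homomorphism $G_1\to G_2$; $G_1,G_2$ are $\mathcal{C}$-$\mathrm{HH}$-symmetric if each is $\mathcal{C}$-$\mathrm{HH}$-morphic to the other. *)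

theory Defs
  imports Main
begin

definition graph :: "'a set \<Rightarrow> ('a \<Rightarrow> 'a \<Rightarrow> bool) \<Rightarrow> bool" where
  "graph V E \<longleftrightarrow> (\<forall>x y. E x y \<longrightarrow> x \<in> V \<and> y \<in> V) \<and>
                   (\<forall>x y. E x y \<longrightarrow> E y x) \<and> (\<forall>x. \<not> E x x)"

definition induced :: "'a set \<Rightarrow> ('a \<Rightarrow> 'a \<Rightarrow> bool) \<Rightarrow> 'a \<Rightarrow> 'a \<Rightarrow> bool" where
  "induced A E = (\<lambda>x y. x \<in> A \<and> y \<in> A \<and> E x y)"

definition connected_graph :: "'a set \<Rightarrow> ('a \<Rightarrow> 'a \<Rightarrow> bool) \<Rightarrow> bool" where
  "connected_graph V E \<longleftrightarrow> V \<noteq> {} \<and>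
     (\<forall>x\<in>V. \<forall>y\<in>V. (induced V E)\<^sup>*\<^sup>* x y)"

definition degree :: "'a set \<Rightarrow> ('a \<Rightarrow> 'a \<Rightarrow> bool) \<Rightarrow> 'a \<Rightarrow> nat" where
  "degree V E x = card {y \<in> V. E x y}"

definition max_degree :: "'a set \<Rightarrow> ('a \<Rightarrow> 'a \<Rightarrow> bool) \<Rightarrow> nat" where
  "max_degree V E = Max (degree V E ` V)"

definition bipartition :: "'a set \<Rightarrow> ('a \<Rightarrow> 'a \<Rightarrow> bool) \<Rightarrow> 'a set \<Rightarrow> 'a set \<Rightarrow> bool" where
  "bipartition V E X Y \<longleftrightarrow> X \<union> Y = V \<and> X \<inter> Y = {} \<and>
     (\<forall>x y. E x y \<longrightarrow> (x \<in> X \<and> y \<in> Y) \<or> (x \<in> Y \<and> y \<in> X))"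

definition common_neighbour :: "'a set \<Rightarrow> ('a \<Rightarrow> 'a \<Rightarrow> bool) \<Rightarrow> 'a set \<Rightarrow> 'a \<Rightarrow> bool" where
  "common_neighbour V E S v \<longleftrightarrow> v \<in> V \<and> (\<forall>a\<in>S. E v a)"

definition B2 :: "'a set \<Rightarrow> ('a \<Rightarrow> 'a \<Rightarrow> bool) \<Rightarrow> 'a set \<Rightarrow> 'a set \<Rightarrow> bool" where
  "B2 V E X Y \<longleftrightarrow> (\<forall>k \<le> max_degree V E. \<forall>S.
      ((S \<subseteq> X \<or> S \<subseteq> Y) \<and> finite S \<and> card S = k) \<longrightarrow> (\<exists>v. common_neighbour V E S v))"

definition B2_star :: "'a set \<Rightarrow> ('a \<Rightarrow> 'a \<Rightarrow> bool) \<Rightarrow> 'a set \<Rightarrow> 'a set \<Rightarrow> bool" where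
  "B2_star V E X Y \<longleftrightarrow> (\<exists>v. common_neighbour V E X v) \<and> (\<exists>v. common_neighbour V E Y v)"

definition hom :: "'a set \<Rightarrow> ('a \<Rightarrow> 'a \<Rightarrow> bool) \<Rightarrow> 'b set \<Rightarrow> ('b \<Rightarrow> 'b \<Rightarrow> bool) \<Rightarrow> ('a \<Rightarrow> 'b) \<Rightarrow> bool" where
  "hom V1 E1 V2 E2 f \<longleftrightarrow> (\<forall>x\<in>V1. f x \<in> V2) \<and>
     (\<forall>x\<in>V1. \<forall>y\<in>V1. E1 x y \<longrightarrow> E2 (f x) (f y))"

definition fin_conn_induced :: "'a set \<Rightarrow> ('a \<Rightarrow> 'a \<Rightarrow> bool) \<Rightarrow> 'a set \<Rightarrow> bool" where
  "fin_conn_induced V E A \<longleftrightarrow> A \<subseteq> V \<and> finite A \<and> connected_graph A (induced A E)"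

definition C_HH :: "'a set \<Rightarrow> ('a \<Rightarrow> 'a \<Rightarrow> bool) \<Rightarrow> bool" where
  "C_HH V E \<longleftrightarrow> (\<forall>A f. fin_conn_induced V E A \<and> hom A (induced A E) V E f \<longrightarrow>
      (\<exists>g. hom V E V E g \<and> (\<forall>x\<in>A. g x = f x)))"

definition C_HH_morphic :: "'a set \<Rightarrow> ('a \<Rightarrow> 'a \<Rightarrow> bool) \<Rightarrow> 'b set \<Rightarrow> ('b \<Rightarrow> 'b \<Rightarrow> bool) \<Rightarrow> bool" where
  "C_HH_morphic V1 E1 V2 E2 \<longleftrightarrow> (\<forall>A B f.
      fin_conn_induced V1 E1 A \<and> B \<subseteq> V2 \<and>
      hom A (induced A E1) B (induced B E2) f \<and> f ` A = B \<longrightarrow>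
      (\<exists>g. hom V1 E1 V2 E2 g \<and> (\<forall>x\<in>A. g x = f x)))"

definition C_HH_symmetric :: "'a set \<Rightarrow> ('a \<Rightarrow> 'a \<Rightarrow> bool) \<Rightarrow> 'b set \<Rightarrow> ('b \<Rightarrow> 'b \<Rightarrow> bool) \<Rightarrow> bool" where
  "C_HH_symmetric V1 E1 V2 E2 \<longleftrightarrow> C_HH_morphic V1 E1 V2 E2 \<and> C_HH_morphic V2 E2 V1 E1"

end

theory Submission
  imports Defs
begin

lemma bip_side: "bipartition V E X Y \<Longrightarrow> E x y \<Longrightarrow> (x \<in> X) \<noteq> (y \<in> X)"
  unfolding bipartition_def by blast

lemma conn_cross:
  assumes "graph V E" "connected_graph V E" "M \<subseteq> V" "a \<in> M" "b \<in> V" "b \<notin> M"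
  shows "\<exists>x\<in>V-M. \<exists>y\<in>M. E x y"
proof -
  have "(induced V E)\<^sup>*\<^sup>* a b" using assms unfolding connected_graph_def by blast
  then have "b \<in> M \<or> (\<exists>x\<in>V-M. \<exists>y\<in>M. E x y)"
  proof (induction rule: rtranclp_induct)
    case base then show ?case using assms by simp
  next
    case (step y z)
    from step.hyps(2) have "y\<in>V" "z\<in>V" "E y z" by (auto simp: induced_def)
    then have "E z y" using assms(1) by (auto simp: graph_def)
    then show ?case using step.IH \<open>z\<in>V\<close> by blast
  qed
  then show ?thesis using assms by blast
qed

lemma ext_main:
  assumes g1: "graph V1 E1" "finite V1" "connected_graph V1 E1"
    and bip1: "bipartition V1 E1 X1 Y1"
    and g2: "graph V2 E2" and bip2: "bipartition V2 E2 X2 Y2"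
    and CN: "\<And>S. finite S \<Longrightarrow> S \<noteq> {} \<Longrightarrow> card S \<le> max_degree V1 E1 \<Longrightarrow> S \<subseteq> X2 \<or> S \<subseteq> Y2
               \<Longrightarrow> \<exists>v. common_neighbour V2 E2 S v"
  shows "card (V1 - M) = n \<Longrightarrow> A \<subseteq> M \<Longrightarrow> M \<subseteq> V1 \<Longrightarrow> M \<noteq> {} \<Longrightarrow>
    hom M (induced M E1) V2 E2 g \<Longrightarrow> \<forall>x\<in>M. (g x \<in> X2) = ((x \<in> X1) = c) \<Longrightarrow>
    \<forall>x\<in>A. g x = f x \<Longrightarrow> \<exists>h. hom V1 E1 V2 E2 h \<and> (\<forall>x\<in>A. h x = f x)"
proof (induction n arbitrary: M g)
  case 0
  then have "V1 - M = {}" using g1(2) by simp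
  then have "M = V1" using 0 by blast
  then have "hom V1 E1 V2 E2 g" using 0 g1(1) by (auto simp: hom_def induced_def graph_def)
  then show ?case using 0 by blast
next
  case (Suc n)
  have "M \<noteq> V1" using Suc.prems(1) by auto
  then obtain b where b: "b \<in> V1" "b \<notin> M" using Suc.prems(3) by blast
  obtain a where a: "a \<in> M" using Suc.prems(4) by blast
  obtain x y where x: "x \<in> V1" "x \<notin> M" and y: "y \<in> M" "E1 x y"
    using conn_cross[OF g1(1) g1(3) Suc.prems(3) a b] by blast
  define N where "N = {z\<in>M. E1 x z}"
  define S where "S = g ` N"
  have finN: "finite N" using g1(2) Suc.prems(3) unfolding N_def
    by (metis (no_types, lifting) finite_subset mem_Collect_eq subsetI subset_iff)
  have yN: "y \<in> N" using y unfolding N_def by blast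
  have "S \<noteq> {}" using yN unfolding S_def by blast
  have finS: "finite S" using finN S_def by simp
  have "card S \<le> card N" unfolding S_def using finN card_image_le by blast
  also have "card N \<le> card {z\<in>V1. E1 x z}"
    by (rule card_mono) (use g1(2) Suc.prems(3) N_def in auto)
  also have "\<dots> \<le> max_degree V1 E1" unfolding max_degree_def degree_def
    using g1(2) x by (intro Max_ge) auto
  finally have cardS: "card S \<le> max_degree V1 E1" .
  have gV: "\<forall>z\<in>M. g z \<in> V2" using Suc.prems(5) by (simp add: hom_def)
  have sides: "\<forall>z\<in>N. (g z \<in> X2) = (\<not>((x\<in>X1) = c))"
  proof
    fix z assume "z \<in> N"
    then have "z \<in> M" "E1 x z" unfolding N_def by auto
    then show "(g z \<in> X2) = (\<not>((x\<in>X1) = c))"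
      using bip_side[OF bip1 \<open>E1 x z\<close>] Suc.prems(6) by auto
  qed
  have "S \<subseteq> X2 \<or> S \<subseteq> Y2"
  proof (cases "(x\<in>X1) = c")
    case True
    have "S \<subseteq> Y2"
    proof
      fix s assume "s \<in> S"
      then obtain z where z: "z \<in> N" "s = g z" unfolding S_def by blast
      then have "s \<in> V2" "s \<notin> X2" using gV sides True unfolding N_def by auto
      then show "s \<in> Y2" using bip2 unfolding bipartition_def by blast
    qed
    then show ?thesis by blast
  next
    case False
    then show ?thesis using sides unfolding S_def by blast
  qed
  then obtain v where v: "common_neighbour V2 E2 S v" using CN[OF finS \<open>S \<noteq> {}\<close> cardS] by blast
  then have vV: "v \<in> V2" and vE: "\<forall>z\<in>N. E2 v (g z)" unfolding common_neighbour_def S_def by auto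
  have vside: "(v \<in> X2) = ((x\<in>X1) = c)"
    using bip_side[OF bip2, of v "g y"] vE yN sides by auto
  define g' where "g' = g(x := v)"
  have "V1 - insert x M = (V1 - M) - {x}" by blast
  then have cd: "card (V1 - insert x M) = n" using Suc.prems(1) x g1(2) by simp
  have hom': "hom (insert x M) (induced (insert x M) E1) V2 E2 g'"
    unfolding hom_def
  proof (intro conjI ballI impI)
    fix z assume "z \<in> insert x M"
    then show "g' z \<in> V2" using gV vV unfolding g'_def by auto
  next
    fix z w assume zw: "z \<in> insert x M" "w \<in> insert x M" "induced (insert x M) E1 z w"
    then have E: "E1 z w" by (simp add: induced_def)
    show "E2 (g' z) (g' w)"
    proof (cases "z = x")
      case True
      then have "w \<noteq> x" using E g1(1) by (auto simp: graph_def)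
      then have "w \<in> N" using zw True E unfolding N_def by auto
      then show ?thesis using vE True \<open>w \<noteq> x\<close> unfolding g'_def by auto
    next
      case False
      note zx = False
      show ?thesis
      proof (cases "w = x")
        case True
        then have "z \<in> N" using zw zx E g1(1) unfolding N_def graph_def by auto
        then have "E2 v (g z)" using vE by blast
        then show ?thesis using g2 True zx unfolding g'_def graph_def by auto
      next
        case False
        then have "z \<in> M" "w \<in> M" using zw zx by auto
        then show ?thesis using Suc.prems(5) E zx False unfolding hom_def induced_def g'_def by auto
      qed
    qed
  qed
  have inv': "\<forall>z\<in>insert x M. (g' z \<in> X2) = ((z \<in> X1) = c)"
    using Suc.prems(6) vside x unfolding g'_def by auto
  have agree: "\<forall>z\<in>A. g' z = f z" using Suc.prems(2,7) x unfolding g'_def by auto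
  show ?case
  proof (rule Suc.IH[OF cd _ _ _ hom' inv' agree])
    show "A \<subseteq> insert x M" using Suc.prems(2) by blast
    show "insert x M \<subseteq> V1" using Suc.prems(3) x by blast
  qed simp
qed

lemma morphic_of_CN:
  assumes g1: "graph V1 E1" "finite V1" "connected_graph V1 E1"
    and bip1: "bipartition V1 E1 X1 Y1"
    and g2: "graph V2 E2" and bip2: "bipartition V2 E2 X2 Y2"
    and CN: "\<And>S. finite S \<Longrightarrow> S \<noteq> {} \<Longrightarrow> card S \<le> max_degree V1 E1 \<Longrightarrow> S \<subseteq> X2 \<or> S \<subseteq> Y2
               \<Longrightarrow> \<exists>v. common_neighbour V2 E2 S v"
  shows "C_HH_morphic V1 E1 V2 E2"
  unfolding C_HH_morphic_def
proof (intro allI impI, elim conjE)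
  fix A B f
  assume A: "fin_conn_induced V1 E1 A" and B: "B \<subseteq> V2"
    and hf: "hom A (induced A E1) B (induced B E2) f" and im: "f ` A = B"
  have AV: "A \<subseteq> V1" and cA: "connected_graph A (induced A E1)"
    using A unfolding fin_conn_induced_def by auto
  obtain a0 where a0: "a0 \<in> A" using cA unfolding connected_graph_def by blast
  define c where "c = ((a0 \<in> X1) = (f a0 \<in> X2))"
  have inv: "\<forall>z\<in>A. (f z \<in> X2) = ((z \<in> X1) = c)"
  proof
    fix z assume "z \<in> A"
    then have "(induced A (induced A E1))\<^sup>*\<^sup>* a0 z" using cA a0 unfolding connected_graph_def by blast
    then show "(f z \<in> X2) = ((z \<in> X1) = c)"
    proof (induction rule: rtranclp_induct)
      case base then show ?case unfolding c_def by auto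
    next
      case (step y z)
      then have yz: "y \<in> A" "z \<in> A" "E1 y z" by (auto simp: induced_def)
      then have "induced B E2 (f y) (f z)" using hf unfolding hom_def induced_def by auto
      then have "E2 (f y) (f z)" by (simp add: induced_def)
      then show ?case using bip_side[OF bip2 \<open>E2 (f y) (f z)\<close>] bip_side[OF bip1 \<open>E1 y z\<close>] step.IH
        by auto
    qed
  qed
  have hf': "hom A (induced A E1) V2 E2 f"
    using hf B unfolding hom_def induced_def by auto
  show "\<exists>g. hom V1 E1 V2 E2 g \<and> (\<forall>x\<in>A. g x = f x)"
    by (rule ext_main[OF g1 bip1 g2 bip2 CN refl, where M=A and A=A and g=f and c=c and f=f])
       (use AV a0 hf' inv in auto)
qed

theorem lemma6p5:
  fixes V1 :: "'a set" and E1 :: "'a \<Rightarrow> 'a \<Rightarrow> bool" and X1 Y1 :: "'a set"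
    and V2 :: "'b set" and E2 :: "'b \<Rightarrow> 'b \<Rightarrow> bool" and X2 Y2 :: "'b set"
  assumes g1: "graph V1 E1" "finite V1" "connected_graph V1 E1"
      and bip1: "bipartition V1 E1 X1 Y1" and hh1: "C_HH V1 E1" and b1: "B2 V1 E1 X1 Y1"
      and g2: "graph V2 E2" "finite V2" "connected_graph V2 E2"
      and bip2: "bipartition V2 E2 X2 Y2" and hh2: "C_HH V2 E2" and b2: "B2 V2 E2 X2 Y2"
  shows "(max_degree V1 E1 \<le> max_degree V2 E2 \<longrightarrow> C_HH_morphic V1 E1 V2 E2)
       \<and> (max_degree V1 E1 = max_degree V2 E2 \<longrightarrow> C_HH_symmetric V1 E1 V2 E2)
       \<and> (max_degree V1 E1 > max_degree V2 E2 \<and> B2_star V2 E2 X2 Y2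
            \<longrightarrow> C_HH_symmetric V1 E1 V2 E2)"
proof -
  have i12: "C_HH_morphic V1 E1 V2 E2" if le: "max_degree V1 E1 \<le> max_degree V2 E2"
  proof (rule morphic_of_CN[OF g1 bip1 g2(1) bip2])
    fix S assume "finite S" "S \<noteq> {}" "card S \<le> max_degree V1 E1" "S \<subseteq> X2 \<or> S \<subseteq> Y2"
    then show "\<exists>v. common_neighbour V2 E2 S v"
    proof -
      assume h: "finite S" "S \<noteq> {}" "card S \<le> max_degree V1 E1" "S \<subseteq> X2 \<or> S \<subseteq> Y2"
      with le have "card S \<le> max_degree V2 E2" by linarith
      then show ?thesis using b2 h unfolding B2_def by blast
    qed
  qed
  have i21: "C_HH_morphic V2 E2 V1 E1" if le: "max_degree V2 E2 \<le> max_degree V1 E1"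
  proof (rule morphic_of_CN[OF g2(1-3) bip2 g1(1) bip1])
    fix S assume "finite S" "S \<noteq> {}" "card S \<le> max_degree V2 E2" "S \<subseteq> X1 \<or> S \<subseteq> Y1"
    then show "\<exists>v. common_neighbour V1 E1 S v"
    proof -
      assume h: "finite S" "S \<noteq> {}" "card S \<le> max_degree V2 E2" "S \<subseteq> X1 \<or> S \<subseteq> Y1"
      with le have "card S \<le> max_degree V1 E1" by linarith
      then show ?thesis using b1 h unfolding B2_def by blast
    qed
  qed
  have iii: "C_HH_morphic V1 E1 V2 E2" if st: "B2_star V2 E2 X2 Y2"
  proof (rule morphic_of_CN[OF g1 bip1 g2(1) bip2])
    fix S assume "finite S" "S \<noteq> {}" "card S \<le> max_degree V1 E1" "S \<subseteq> X2 \<or> S \<subseteq> Y2"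
    then show "\<exists>v. common_neighbour V2 E2 S v" using st unfolding B2_star_def common_neighbour_def
      by blast
  qed
  show ?thesis using i12 i21 iii unfolding C_HH_symmetric_def by auto
qed

end
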